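(* Let $P$ be an EVM program, $(\mathcal{X}_{pc})_{pc}$ the least solution of its addresses equation system, and $G=\langle V,E\rangle$ its stack-sensitive control flow graph. Then for every execution trace $t\equiv S_0\Rightarrow\dots\Rightarrow S_m$ of $P$ from $S_0=\langle 0,\langle 0,\sigma_\emptyset\rangle\rangle$, if $B^{(0)},B^{(1)},\dots,B^{(k)}$ is the sequence of blocks executed by $t$, there is a directed walk $v_0\to v_1\to\dots\to v_k$ in $G$ with $v_0=(B^{(0)},\langle 0,\sigma_\emptyset\rangle)$ such that each $v_\ell$ is a replica of $B^{(\ell)}$, i.e. $v_\ell=(B^{(\ell)},s_\ell)$ for some stack state $s_\ell$.
   Context: EVM programs. An EVM program $P\equiv b_0,\dots,b_p$ is a finite sequence of instructions, each located at a program counter (byte offset); $b_{pc}$ is the instruction at $pc$, $size(b)$ its number of bytes, so the next instruction is at $pc+size(b_{pc})$. Let $Jump=\{\texttt{JUMP},\texttt{JUMPI}\}$, $End=\{\texttt{REVERT},\texttt{STOP},\texttt{INVALID}\}$, $\mathcal{J}(P)=\{pc\mid b_{pc}\equiv\texttt{JUMPDEST}\}$. Other instructions $b^{\delta,\alpha}$ remove $\delta$ and then add $\alpha$ stack items. Blocks. $blocks(P)$ is the set of maximal segments $B_i\equiv b_i,\dots,b_j$ of consecutive instructions such that no instruction strictly between $b_i$ and $b_j$ is in $Jump\cup End\cup\{\texttt{JUMPDEST}\}$; $b_i$ is the first instruction of $P$, or $b_i\equiv\texttt{JUMPDEST}$, or the instruction preceding $b_i$ is $\texttt{JUMPI}$;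 and $b_j$ is the last instruction of $P$, or $b_j\in Jump\cup End$, or the instruction following $b_j$ is $\texttt{JUMPDEST}$. A block is identified by the program counter $i$ of its first instruction. The sequence of blocks executed by a trace $t$ is obtained by listing, in order, the block $B_{pc}$ for each state $\langle pc,\_\rangle$ of $t$ whose $pc$ is the first instruction of a block. Stack states: pairs $\langle n,\sigma\rangle$, $n\ge0$ the stack size (positions $s_0,\dots,s_{n-1}$, top $s_{n-1}$), $\sigma$ a partial map from positions to finite sets of jump destinations; $\sigma_\emptyset$ the empty map; $m[x\mapsto y]$ update; $m\backslash[x_1,\dots,x_k]$ removal from domain. Semantics. States $\langle pc,\langle n,\sigma\rangle\rangle$; transitions: $b_{pc}=\texttt{JUMP}$: $\Rightarrow\langle v,\langle n-1,\sigma\backslash[s_{n-1}]\rangle\rangle$ with $\sigma(s_{n-1})=\{v\}$; $b_{pc}=\texttt{JUMPI}$: $\Rightarrow\langle v,\langle n-2,\sigma\backslash[s_{n-1},s_{n-2}]\rangle\rangle$ with $\sigma(s_{n-1})=\{v\}$, or $\Rightarrow\langle pc+size(b_{pc}),\langle n-2,\sigma\backslash[s_{n-1},s_{n-2}]\rangle\rangle$; for $b_{pc}\notin Jump\cup End$: $\Rightarrow\langle pc+size(b_{pc}),\lambda(b_{pc},\langle n,\sigma\rangle)\rangle$; no transition from $End$. Update function $\lambda$: $\lambda(\texttt{JUMP},\langle n,\sigma\rangle)=\langle n-1,\sigma\backslash[s_{n-1}]\rangle$; $\lambda(\texttt{JUMPI},\langle n,\sigma\rangle)=\langle n-2,\sigma\backslash[s_{n-1},s_{n-2}]\rangle$;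 $\lambda(\texttt{PUSH}x\ v,\langle n,\sigma\rangle)=\langle n+1,\sigma[s_n\mapsto\{v\}]\rangle$ if $v\in\mathcal{J}(P)$, else $\langle n+1,\sigma\rangle$; $\lambda(\texttt{DUP}x,\langle n,\sigma\rangle)=\langle n+1,\sigma[s_n\mapsto\sigma(s_{n-x})]\rangle$ if $s_{n-x}\in dom(\sigma)$, else $\langle n+1,\sigma\rangle$; $\lambda(\texttt{SWAP}x,\langle n,\sigma\rangle)=\langle n,\sigma'\rangle$ with the contents (defined or undefined) of $s_{n-1}$ and $s_{n-x-1}$ exchanged; other $b^{\delta,\alpha}\notin End$: $\lambda(b,\langle n,\sigma\rangle)=\langle n-\delta+\alpha,\sigma\backslash[s_{n-1},\dots,s_{n-\delta}]\rangle$. Abstract states: partial maps from stack states to sets of stack states, ordered by domain inclusion and pointwise inclusion; bottom the empty map. $\tau(b,\pi)(s)=\{\lambda(b,t)\mid t\in\pi(s)\}$ on $dom(\pi)$; $idmap(t)$ maps $t$ to $\{t\}$ only. Addresses equation system: variables $\mathcal{X}_{pc}$ with constraints $\mathcal{X}_0\sqsupseteq idmap(\langle0,\sigma_\emptyset\rangle)$; if $b_{pc}=\texttt{JUMP}$: $\mathcal{X}_v\sqsupseteq idmap(\lambda(b_{pc},\langle n,\sigma\rangle))$ for all $s\in dom(\mathcal{X}_{pc})$, $\langle n,\sigma\rangle\in\mathcal{X}_{pc}(s)$, $v\in\sigma(s_{n-1})$; if $b_{pc}=\texttt{JUMPI}$: the same plus $\mathcal{X}_{pc+1}\sqsupseteq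 idmap(\lambda(b_{pc},\langle n,\sigma\rangle))$; if $b_{pc}\notin End\cup Jump$ and $b_{pc+size(b_{pc})}=\texttt{JUMPDEST}$: $\mathcal{X}_{pc+size(b_{pc})}\sqsupseteq idmap(\lambda(b_{pc},\langle n,\sigma\rangle))$ for all such $s,\langle n,\sigma\rangle$; otherwise if $b_{pc}\notin End\cup Jump$: $\mathcal{X}_{pc+size(b_{pc})}\sqsupseteq\tau(b_{pc},\mathcal{X}_{pc})$. Take the least solution. Stack-sensitive CFG $G=\langle V,E\rangle$: $V=\{(B_i,s)\mid B_i\in blocks(P),\ s\in dom(\mathcal{X}_i)\}$ (replicas of block $B_i$, one per entry stack state). For each block $B_i\equiv b_i,\dots,b_j$, each $s\in dom(\mathcal{X}_j)$ and each $\langle n',\sigma'\rangle\in\mathcal{X}_j(s)$, with $\langle n'',\sigma''\rangle=\lambda(b_j,\langle n',\sigma'\rangle)$: if $b_j\in Jump$, there is an edge $(B_i,s)\to(B_d,\langle n'',\sigma''\rangle)$ for every $d\in\sigma'(s_{n'-1})$; if $b_j\neq\texttt{JUMP}$ and $b_j\notin End$, there is an edge $(B_i,s)\to(B_d,\langle n'',\sigma''\rangle)$ with $d=j+size(b_j)$. $E$ is the set of all these edges. *)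

theory Defs
  imports Main
begin

text \<open>Instructions. PUSH x v has x immediate bytes (size x+1); OP d a is any other
  instruction removing d and adding a stack items.\<close>
datatype instr =
    JUMP | JUMPI | JUMPDEST | REVERT | STOP | INVALID
  | PUSH nat nat | DUP nat | SWAP nat | OP nat nat

fun isize :: "instr \<Rightarrow> nat" where
  "isize (PUSH x v) = x + 1"
| "isize _ = 1"

definition Jump :: "instr set" where "Jump = {JUMP, JUMPI}"
definition End :: "instr set" where "End = {REVERT, STOP, INVALID}"

type_synonym program = "instr list"

definition pc_of :: "program \<Rightarrow> nat \<Rightarrow> nat" where
  "pc_of P k = sum_list (map isize (take k P))"

definition code :: "program \<Rightarrow> nat \<Rightarrow> instr option" where
  "code P = map_of (zip (map (pc_of P) [0..<length P]) P)"

definition jumpdests :: "program \<Rightarrow> nat set" where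
  "jumpdests P = {pc. code P pc = Some JUMPDEST}"

type_synonym sstate = "nat \<times> (nat \<rightharpoonup> nat set)"

fun lam :: "program \<Rightarrow> instr \<Rightarrow> sstate \<Rightarrow> sstate" where
  "lam P JUMP (n, \<sigma>) = (n - 1, \<sigma>(n - 1 := None))"
| "lam P JUMPI (n, \<sigma>) = (n - 2, \<sigma>(n - 1 := None, n - 2 := None))"
| "lam P (PUSH x v) (n, \<sigma>) = (n + 1, if v \<in> jumpdests P then \<sigma>(n \<mapsto> {v}) else \<sigma>)"
| "lam P (DUP x) (n, \<sigma>) = (n + 1, if \<sigma> (n - x) \<noteq> None then \<sigma>(n := \<sigma> (n - x)) else \<sigma>)"
| "lam P (SWAP x) (n, \<sigma>) = (n, \<sigma>(n - 1 := \<sigma> (n - x - 1), n - x - 1 := \<sigma> (n - 1)))"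
| "lam P (OP d a) (n, \<sigma>) = (n - d + a, \<sigma> |` (- {n - d ..< n}))"
| "lam P JUMPDEST (n, \<sigma>) = (n, \<sigma>)"
| "lam P REVERT s = s"   (* never used: no transition from End *)
| "lam P STOP s = s"
| "lam P INVALID s = s"

type_synonym cstate = "nat \<times> sstate"

inductive step :: "program \<Rightarrow> cstate \<Rightarrow> cstate \<Rightarrow> bool" for P where
  jump: "\<lbrakk> code P pc = Some JUMP; \<sigma> (n - 1) = Some {v} \<rbrakk>
     \<Longrightarrow> step P (pc, (n, \<sigma>)) (v, (n - 1, \<sigma>(n - 1 := None)))"
| jumpi_taken: "\<lbrakk> code P pc = Some JUMPI; \<sigma> (n - 1) = Some {v} \<rbrakk>
     \<Longrightarrow> step P (pc, (n, \<sigma>)) (v, (n - 2, \<sigma>(n - 1 := None, n - 2 := None)))"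
| jumpi_fall: "code P pc = Some JUMPI
     \<Longrightarrow> step P (pc, (n, \<sigma>)) (pc + isize JUMPI, (n - 2, \<sigma>(n - 1 := None, n - 2 := None)))"
| other: "\<lbrakk> code P pc = Some b; b \<notin> Jump \<union> End \<rbrakk>
     \<Longrightarrow> step P (pc, st) (pc + isize b, lam P b st)"

definition init_sstate :: sstate where "init_sstate = (0, Map.empty)"

definition is_trace :: "program \<Rightarrow> cstate list \<Rightarrow> bool" where
  "is_trace P t \<longleftrightarrow> t \<noteq> [] \<and> hd t = (0, init_sstate)
     \<and> (\<forall>i. Suc i < length t \<longrightarrow> step P (t ! i) (t ! Suc i))"

definition is_pc :: "program \<Rightarrow> nat \<Rightarrow> bool" where
  "is_pc P pc \<longleftrightarrow> code P pc \<noteq> None"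

definition is_last :: "program \<Rightarrow> nat \<Rightarrow> bool" where
  "is_last P pc \<longleftrightarrow> P \<noteq> [] \<and> pc = pc_of P (length P - 1)"

definition block_start :: "program \<Rightarrow> nat \<Rightarrow> bool" where
  "block_start P i \<longleftrightarrow> is_pc P i \<and>
     (i = 0 \<or> code P i = Some JUMPDEST
      \<or> (\<exists>p. code P p = Some JUMPI \<and> p + isize JUMPI = i))"

definition ends_block :: "program \<Rightarrow> nat \<Rightarrow> bool" where
  "ends_block P j \<longleftrightarrow> (case code P j of None \<Rightarrow> False | Some b \<Rightarrow>
      is_last P j \<or> b \<in> Jump \<union> End \<or> code P (j + isize b) = Some JUMPDEST)"

definition block_end :: "program \<Rightarrow> nat \<Rightarrow> nat \<Rightarrow> bool" where
  "block_end P i j \<longleftrightarrow> block_start P i \<and> i \<le> j \<and> ends_block P j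
     \<and> (\<forall>pc. is_pc P pc \<and> i \<le> pc \<and> pc < j \<longrightarrow> \<not> ends_block P pc)"

definition exec_blocks :: "program \<Rightarrow> cstate list \<Rightarrow> nat list" where
  "exec_blocks P t = map fst (filter (\<lambda>S. block_start P (fst S)) t)"

type_synonym astate = "sstate \<rightharpoonup> sstate set"

definition ale :: "astate \<Rightarrow> astate \<Rightarrow> bool" where
  "ale A B \<longleftrightarrow> dom A \<subseteq> dom B \<and> (\<forall>s\<in>dom A. the (A s) \<subseteq> the (B s))"

definition idmap :: "sstate \<Rightarrow> astate" where
  "idmap t = [t \<mapsto> {t}]"

definition tau :: "program \<Rightarrow> instr \<Rightarrow> astate \<Rightarrow> astate" where
  "tau P b \<pi> = (\<lambda>s. map_option (image (lam P b)) (\<pi> s))"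

definition in_abs :: "astate \<Rightarrow> sstate \<Rightarrow> sstate \<Rightarrow> bool" where
  "in_abs A s t \<longleftrightarrow> (\<exists>T. A s = Some T \<and> t \<in> T)"

definition solution :: "program \<Rightarrow> (nat \<Rightarrow> astate) \<Rightarrow> bool" where
  "solution P X \<longleftrightarrow>
     ale (idmap init_sstate) (X 0) \<and>
     (\<forall>pc b. code P pc = Some b \<longrightarrow>
        (b \<in> Jump \<longrightarrow> (\<forall>s n \<sigma> D v. in_abs (X pc) s (n, \<sigma>) \<longrightarrow> \<sigma> (n - 1) = Some D \<longrightarrow> v \<in> D
              \<longrightarrow> ale (idmap (lam P b (n, \<sigma>))) (X v))) \<and>
        (b = JUMPI \<longrightarrow> (\<forall>s t. in_abs (X pc) s t
              \<longrightarrow> ale (idmap (lam P b t)) (X (pc + 1)))) \<and>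
        (b \<notin> End \<union> Jump \<and> code P (pc + isize b) = Some JUMPDEST \<longrightarrow>
            (\<forall>s t. in_abs (X pc) s t \<longrightarrow> ale (idmap (lam P b t)) (X (pc + isize b)))) \<and>
        (b \<notin> End \<union> Jump \<and> code P (pc + isize b) \<noteq> Some JUMPDEST \<longrightarrow>
            ale (tau P b (X pc)) (X (pc + isize b))))"

definition least_solution :: "program \<Rightarrow> (nat \<Rightarrow> astate) \<Rightarrow> bool" where
  "least_solution P X \<longleftrightarrow> solution P X \<and>
     (\<forall>Y. solution P Y \<longrightarrow> (\<forall>pc. ale (X pc) (Y pc)))"

text \<open>vertices: (block start pc, entry stack state)\<close>
definition cfg_V :: "program \<Rightarrow> (nat \<Rightarrow> astate) \<Rightarrow> (nat \<times> sstate) set" where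
  "cfg_V P X = {(i, s). block_start P i \<and> s \<in> dom (X i)}"

definition cfg_E :: "program \<Rightarrow> (nat \<Rightarrow> astate) \<Rightarrow> ((nat \<times> sstate) \<times> (nat \<times> sstate)) set" where
  "cfg_E P X = {((i, s), (d, s'')) | i j b s n' \<sigma>' s'' d.
      block_end P i j \<and> code P j = Some b \<and> in_abs (X j) s (n', \<sigma>') \<and>
      s'' = lam P b (n', \<sigma>') \<and>
      ((b \<in> Jump \<and> (\<exists>D. \<sigma>' (n' - 1) = Some D \<and> d \<in> D))
       \<or> (b \<noteq> JUMP \<and> b \<notin> End \<and> d = j + isize b))}"

end

theory Submission imports Defs begin

lemma isize_pos: "0 < isize b" by (cases b) auto

lemma code_SomeD: "code P q = Some c \<Longrightarrow> \<exists>k<length P. q = pc_of P k \<and> c = P!k"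
  unfolding code_def by (auto dest!: map_of_SomeD simp: in_set_zip) blast

lemma pc_of_Suc: "k < length P \<Longrightarrow> pc_of P (Suc k) = pc_of P k + isize (P!k)"
  by (simp add: pc_of_def take_Suc_conv_app_nth)

lemma pc_of_mono: assumes "k \<le> k'" shows "pc_of P k \<le> pc_of P k'"
proof -
  have "take k' P = take k P @ drop k (take k' P)"
    using assms by (metis append_take_drop_id min.absorb1 take_take)
  then have "pc_of P k' = pc_of P k + sum_list (map isize (drop k (take k' P)))"
    unfolding pc_of_def by (metis map_append sum_list_append)
  then show ?thesis by simp
qed

lemma key: "code P p = Some b \<Longrightarrow> code P q = Some c \<Longrightarrow> p < q \<Longrightarrow> p + isize b \<le> q"
proof -
  assume a: "code P p = Some b" "code P q = Some c" "p < q"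
  obtain k1 where k1: "k1 < length P" "p = pc_of P k1" "b = P!k1" using code_SomeD[OF a(1)] by blast
  obtain k2 where k2: "k2 < length P" "q = pc_of P k2" "c = P!k2" using code_SomeD[OF a(2)] by blast
  have "\<not> k2 \<le> k1" using pc_of_mono[of k2 k1 P] k1 k2 a(3) by auto
  then have "Suc k1 \<le> k2" by simp
  then show ?thesis using pc_of_mono[of "Suc k1" k2 P] pc_of_Suc[OF k1(1)] k1 k2 by simp
qed

lemma last_next: "is_last P j \<Longrightarrow> code P j = Some b \<Longrightarrow> code P (j + isize b) = None"
proof (rule ccontr)
  assume a: "is_last P j" "code P j = Some b" "code P (j + isize b) \<noteq> None"
  then obtain c where c: "code P (j + isize b) = Some c" by auto
  obtain k2 where k2: "k2 < length P" "j + isize b = pc_of P k2" using code_SomeD[OF c] by blast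
  have "pc_of P k2 \<le> pc_of P (length P - 1)" using k2 by (intro pc_of_mono) simp
  then show False using a(1) k2 isize_pos[of b] unfolding is_last_def by simp
qed

lemma not_start:
  assumes "code P p = Some b" "b \<notin> Jump \<union> End" "\<not> ends_block P p"
  shows "\<not> block_start P (p + isize b)"
proof
  assume bs: "block_start P (p + isize b)"
  have nj: "code P (p + isize b) \<noteq> Some JUMPDEST" using assms unfolding ends_block_def by auto
  from bs nj obtain p' where p': "code P p' = Some JUMPI" "p' + isize JUMPI = p + isize b"
    unfolding block_start_def using isize_pos[of b] by auto
  consider "p' = p" | "p < p'" | "p' < p" by linarith
  then show False
  proof cases
    case 1 then show ?thesis using p' assms by (auto simp: Jump_def)
  next
    case 2 then show ?thesis using key[OF assms(1) p'(1)] p' by simp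
  next
    case 3 then show ?thesis using key[OF p'(1) assms(1)] p' isize_pos[of b] by simp
  qed
qed

definition good :: "program \<Rightarrow> (nat \<rightharpoonup> nat set) \<Rightarrow> bool" where
  "good P \<sigma> \<longleftrightarrow> (\<forall>k V. \<sigma> k = Some V \<longrightarrow> V \<subseteq> jumpdests P)"

lemma good_lam: "good P (snd st) \<Longrightarrow> good P (snd (lam P b st))"
  by (cases st; cases b) (auto simp: good_def restrict_map_def split: if_splits)

lemma step_good: "step P S S' \<Longrightarrow> good P (snd (snd S)) \<Longrightarrow> good P (snd (snd S'))"
proof (induction rule: step.induct)
  case (other pc b st)
  then show ?case using good_lam[of P st b] by simp
qed (auto simp: good_def)

lemma ale_idmap: "ale (idmap t) A \<Longrightarrow> in_abs A t t \<and> t \<in> dom A"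
  by (auto simp: ale_def idmap_def in_abs_def)

lemma ale_tau: "ale (tau P b A) B \<Longrightarrow> in_abs A s t \<Longrightarrow> in_abs B s (lam P b t)"
proof -
  assume a: "ale (tau P b A) B" "in_abs A s t"
  then obtain T where T: "A s = Some T" "t \<in> T" unfolding in_abs_def by blast
  then have ts: "tau P b A s = Some (lam P b ` T)" by (simp add: tau_def)
  then have "s \<in> dom B" using a(1) unfolding ale_def by blast
  then obtain U where U: "B s = Some U" by blast
  have "lam P b ` T \<subseteq> U" using a(1) ts U unfolding ale_def by (metis domI option.sel)
  then show ?thesis using U T unfolding in_abs_def by blast
qed

definition is_walk :: "('v \<times> 'v) set \<Rightarrow> 'v list \<Rightarrow> bool" where
  "is_walk E vs \<longleftrightarrow> (\<forall>l. Suc l < length vs \<longrightarrow> (vs!l, vs!Suc l) \<in> E)"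

lemma is_walk_snoc: "is_walk E vs \<Longrightarrow> vs \<noteq> [] \<Longrightarrow> (last vs, v) \<in> E \<Longrightarrow> is_walk E (vs @ [v])"
  unfolding is_walk_def
proof (intro allI impI)
  fix l assume a: "\<forall>l. Suc l < length vs \<longrightarrow> (vs ! l, vs ! Suc l) \<in> E" "vs \<noteq> []"
    "(last vs, v) \<in> E" "Suc l < length (vs @ [v])"
  show "((vs @ [v]) ! l, (vs @ [v]) ! Suc l) \<in> E"
  proof (cases "Suc l < length vs")
    case True then show ?thesis using a by (simp add: nth_append)
  next
    case False
    then have "Suc l = length vs" using a by simp
    then have "l = length vs - 1" by simp
    then show ?thesis using a \<open>Suc l = length vs\<close> by (simp add: nth_append last_conv_nth)
  qed
qed

definition binv :: "program \<Rightarrow> (nat \<Rightarrow> astate) \<Rightarrow> cstate \<Rightarrow> (nat \<times> sstate) list \<Rightarrow> bool" where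
  "binv P X S vs \<longleftrightarrow> (is_pc P (fst S) \<longrightarrow> vs \<noteq> [] \<and> fst (last vs) \<le> fst S
     \<and> (\<forall>q. is_pc P q \<and> fst (last vs) \<le> q \<and> q < fst S \<longrightarrow> \<not> ends_block P q)
     \<and> in_abs (X (fst S)) (snd (last vs)) (snd S))"

lemma exec_blocks_snoc: "exec_blocks P (ts @ [x]) = exec_blocks P ts @ (if block_start P (fst x) then [fst x] else [])"
  by (simp add: exec_blocks_def)

lemma step_cases:
  assumes "step P (pc, st) (pc', st')" "code P pc = Some b"
  shows "(b \<notin> Jump \<union> End \<longrightarrow> pc' = pc + isize b \<and> st' = lam P b st)
    \<and> (b = JUMP \<longrightarrow> st' = lam P b st \<and> snd st (fst st - 1) = Some {pc'})
    \<and> (b = JUMPI \<longrightarrow> st' = lam P b st \<and> (snd st (fst st - 1) = Some {pc'} \<or> pc' = pc + 1))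
    \<and> b \<notin> End"
  using assms by (cases rule: step.cases) (auto simp: Jump_def End_def)

lemma main:
  assumes sol: "solution P X"
  shows "t \<noteq> [] \<Longrightarrow> hd t = (0, init_sstate) \<Longrightarrow> (\<forall>i. Suc i < length t \<longrightarrow> step P (t!i) (t!Suc i)) \<Longrightarrow>
   \<exists>vs. map fst vs = exec_blocks P t \<and> set vs \<subseteq> cfg_V P X \<and> (vs \<noteq> [] \<longrightarrow> snd (hd vs) = init_sstate)
     \<and> is_walk (cfg_E P X) vs \<and> good P (snd (snd (last t))) \<and> binv P X (last t) vs"
proof (induction t rule: rev_induct)
  case Nil then show ?case by simp
next
  case (snoc x ts)
  show ?case
  proof (cases "ts = []")
    case True
    then have x: "x = (0, init_sstate)" using snoc.prems by simp
    have g: "good P (snd (snd (last (ts @ [x]))))" using x by (simp add: init_sstate_def good_def)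
    have ai: "in_abs (X 0) init_sstate init_sstate \<and> init_sstate \<in> dom (X 0)"
      using sol unfolding solution_def by (intro ale_idmap) blast
    show ?thesis
    proof (cases "is_pc P 0")
      case pc: True
      then have bs: "block_start P 0" by (simp add: block_start_def)
      show ?thesis
        apply (rule exI[of _ "[(0, init_sstate)]"])
        using True x bs ai g pc
        by (simp add: exec_blocks_def cfg_V_def is_walk_def binv_def)
    next
      case pc: False
      then have bs: "\<not> block_start P 0" by (simp add: block_start_def)
      show ?thesis
        apply (rule exI[of _ "[]"])
        using True x bs g pc
        by (simp add: exec_blocks_def is_walk_def binv_def)
    qed
  next
    case False
    have stp: "\<forall>i. Suc i < length ts \<longrightarrow> step P (ts!i) (ts!Suc i)"
    proof (intro allI impI)
      fix i assume i: "Suc i < length ts"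
      then have "step P ((ts @ [x]) ! i) ((ts @ [x]) ! Suc i)" using snoc.prems(3) by simp
      then show "step P (ts!i) (ts!Suc i)" using i by (simp add: nth_append)
    qed
    obtain vs where vs: "map fst vs = exec_blocks P ts" "set vs \<subseteq> cfg_V P X"
      "vs \<noteq> [] \<longrightarrow> snd (hd vs) = init_sstate" "is_walk (cfg_E P X) vs"
      "good P (snd (snd (last ts)))" "binv P X (last ts) vs"
      using snoc.IH[OF False _ stp] snoc.prems(2) False by auto
    obtain pc st where lt: "last ts = (pc, st)" by (cases "last ts")
    obtain pc' st' where xe: "x = (pc', st')" by (cases x)
    have "step P ((ts @ [x]) ! (length ts - 1)) ((ts @ [x]) ! Suc (length ts - 1))"
    proof -
      have "Suc (length ts - 1) < length (ts @ [x])" using False by simp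
      then show ?thesis using snoc.prems(3) by blast
    qed
    then have st: "step P (pc, st) (pc', st')"
      using False lt xe by (simp add: nth_append last_conv_nth)
    then obtain b where cb: "code P pc = Some b" by (cases rule: step.cases) auto
    then have ipc: "is_pc P pc" by (simp add: is_pc_def)
    note sc = step_cases[OF st cb]
    obtain i0 s0 where ls: "last vs = (i0, s0)" by (cases "last vs")
    have vne: "vs \<noteq> []" and i0: "i0 \<le> pc"
      and nob: "\<forall>q. is_pc P q \<and> i0 \<le> q \<and> q < pc \<longrightarrow> \<not> ends_block P q"
      and ia: "in_abs (X pc) s0 st"
      using vs(6) ipc lt ls unfolding binv_def by auto
    have "last vs \<in> cfg_V P X" using vs(2) vne by auto
    then have bs0: "block_start P i0" and dm0: "s0 \<in> dom (X i0)" using ls by (auto simp: cfg_V_def)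
    have g': "good P (snd (snd (last (ts @ [x]))))" using step_good[OF st] vs(5) lt xe by simp
    have solc: "(b \<in> Jump \<longrightarrow> (\<forall>s n \<sigma> D v. in_abs (X pc) s (n, \<sigma>) \<longrightarrow> \<sigma> (n - 1) = Some D \<longrightarrow> v \<in> D
              \<longrightarrow> ale (idmap (lam P b (n, \<sigma>))) (X v))) \<and>
        (b = JUMPI \<longrightarrow> (\<forall>s t. in_abs (X pc) s t
              \<longrightarrow> ale (idmap (lam P b t)) (X (pc + 1)))) \<and>
        (b \<notin> End \<union> Jump \<and> code P (pc + isize b) = Some JUMPDEST \<longrightarrow>
            (\<forall>s t. in_abs (X pc) s t \<longrightarrow> ale (idmap (lam P b t)) (X (pc + isize b)))) \<and>
        (b \<notin> End \<union> Jump \<and> code P (pc + isize b) \<noteq> Some JUMPDEST \<longrightarrow>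
            ale (tau P b (X pc)) (X (pc + isize b)))"
      using sol cb unfolding solution_def by blast
    show ?thesis
    proof (cases "ends_block P pc")
      case eb: True
      have be: "block_end P i0 pc" unfolding block_end_def using bs0 i0 eb nob by blast
      obtain n \<sigma> where sst: "st = (n, \<sigma>)" by (cases st)
      have key: "((i0, s0), (pc', st')) \<in> cfg_E P X \<and>
          (block_start P pc' \<longrightarrow> in_abs (X pc') st' st' \<and> st' \<in> dom (X pc')) \<and>
          (\<not> block_start P pc' \<longrightarrow> \<not> is_pc P pc')"
      proof (cases "b \<in> Jump")
        case bj: True
        show ?thesis
        proof (cases "\<sigma> (n - 1) = Some {pc'}")
          case sg: True
          have stl: "st' = lam P b st" using sc bj by (auto simp: Jump_def)
          have e: "((i0, s0), (pc', st')) \<in> cfg_E P X"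
            unfolding cfg_E_def using be cb ia sst stl bj sg by blast
          have "{pc'} \<subseteq> jumpdests P" using vs(5) lt sst sg unfolding good_def by auto
          then have "code P pc' = Some JUMPDEST" by (simp add: jumpdests_def)
          then have bsp: "block_start P pc'" by (simp add: block_start_def is_pc_def)
          have "ale (idmap (lam P b (n, \<sigma>))) (X pc')" using solc bj ia sst sg by blast
          then show ?thesis using e bsp ale_idmap stl sst by metis
        next
          case sg: False
          then have bJ: "b = JUMPI" and pcs: "pc' = pc + 1" and stl: "st' = lam P b st"
            using sc bj sst by (auto simp: Jump_def)
          have e: "((i0, s0), (pc', st')) \<in> cfg_E P X"
            unfolding cfg_E_def using be cb ia sst stl bJ pcs
            by (smt (verit, best) End_def One_nat_def instr.distinct insertE isize.simps empty_iff mem_Collect_eq)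
          have "block_start P pc' \<longleftrightarrow> is_pc P pc'" using cb bJ pcs by (auto simp: block_start_def)
          moreover have "ale (idmap (lam P b st)) (X pc')" using solc bJ ia pcs by blast
          ultimately show ?thesis using e ale_idmap stl by metis
        qed
      next
        case bj: False
        have bE: "b \<notin> End" using sc by blast
        then have pcs: "pc' = pc + isize b" and stl: "st' = lam P b st" using sc bj by auto
        have bnj: "b \<noteq> JUMP" using bj by (auto simp: Jump_def)
        have e: "((i0, s0), (pc', st')) \<in> cfg_E P X"
          unfolding cfg_E_def using be cb ia sst stl pcs bE bnj by blast
        have "is_last P pc \<or> code P (pc + isize b) = Some JUMPDEST"
          using eb cb bj bE unfolding ends_block_def by auto
        then show ?thesis
        proof
          assume "is_last P pc"
          then have "\<not> is_pc P pc'" using last_next[OF _ cb] pcs by (simp add: is_pc_def)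
          then show ?thesis using e by (simp add: block_start_def)
        next
          assume jd: "code P (pc + isize b) = Some JUMPDEST"
          then have "block_start P pc'" using pcs by (simp add: block_start_def is_pc_def)
          moreover have "ale (idmap (lam P b st)) (X pc')" using solc bj bE jd ia pcs by blast
          ultimately show ?thesis using e ale_idmap stl by metis
        qed
      qed
      show ?thesis
      proof (cases "block_start P pc'")
        case True
        show ?thesis
          apply (rule exI[of _ "vs @ [(pc', st')]"])
          using vs vne key True g' xe ls
          by (auto simp: exec_blocks_snoc binv_def cfg_V_def intro!: is_walk_snoc)
      next
        case False
        show ?thesis
          apply (rule exI[of _ vs])
          using vs vne key False g' xe
          by (auto simp: exec_blocks_snoc binv_def)
      qed
    next
      case neb: False
      have bJE: "b \<notin> Jump \<union> End" using neb cb unfolding ends_block_def by auto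
      have njd: "code P (pc + isize b) \<noteq> Some JUMPDEST" using neb cb unfolding ends_block_def by auto
      have pcs: "pc' = pc + isize b" and stl: "st' = lam P b st" using sc bJE by auto
      have nbs: "\<not> block_start P pc'" using not_start[OF cb bJE neb] pcs by simp
      have "ale (tau P b (X pc)) (X pc')" using solc bJE njd pcs by blast
      then have ia': "in_abs (X pc') s0 st'" using ale_tau ia stl by metis
      have nob': "\<forall>q. is_pc P q \<and> i0 \<le> q \<and> q < pc' \<longrightarrow> \<not> ends_block P q"
      proof (intro allI impI)
        fix q assume q: "is_pc P q \<and> i0 \<le> q \<and> q < pc'"
        show "\<not> ends_block P q"
        proof (cases "q < pc")
          case True then show ?thesis using nob q by blast
        next
          case False
          show ?thesis
          proof (cases "q = pc")
            case True then show ?thesis using neb by simp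
          next
            case False
            then have "pc < q" using \<open>\<not> q < pc\<close> by simp
            moreover obtain c where "code P q = Some c" using q by (auto simp: is_pc_def)
            ultimately have "pc + isize b \<le> q" using key[OF cb] by blast
            then show ?thesis using q pcs by simp
          qed
        qed
      qed
      show ?thesis
        apply (rule exI[of _ vs])
        using vs vne nbs g' xe ls i0 pcs ia' nob'
        by (auto simp: exec_blocks_snoc binv_def)
    qed
  qed
qed

theorem theorem2:
  fixes P :: program and X :: "nat \<Rightarrow> astate" and t :: "cstate list"
  assumes "least_solution P X"
    and "is_trace P t"
  shows "\<exists>vs :: (nat \<times> sstate) list.
           length vs = length (exec_blocks P t)
         \<and> (exec_blocks P t \<noteq> [] \<longrightarrow> vs ! 0 = (exec_blocks P t ! 0, init_sstate))
         \<and> (\<forall>l < length vs. fst (vs ! l) = exec_blocks P t ! l \<and> vs ! l \<in> cfg_V P X)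
         \<and> (\<forall>l. Suc l < length vs \<longrightarrow> (vs ! l, vs ! Suc l) \<in> cfg_E P X)"
proof -
  have sol: "solution P X" using assms(1) by (simp add: least_solution_def)
  obtain vs where vs: "map fst vs = exec_blocks P t" "set vs \<subseteq> cfg_V P X"
    "vs \<noteq> [] \<longrightarrow> snd (hd vs) = init_sstate" "is_walk (cfg_E P X) vs"
    using main[OF sol] assms(2) unfolding is_trace_def by blast
  have l: "length vs = length (exec_blocks P t)" using vs(1) by (metis length_map)
  have h: "exec_blocks P t \<noteq> [] \<longrightarrow> vs ! 0 = (exec_blocks P t ! 0, init_sstate)"
  proof
    assume "exec_blocks P t \<noteq> []"
    then have ne: "vs \<noteq> []" using vs(1) by auto
    then have "vs ! 0 = hd vs" by (simp add: hd_conv_nth)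
    moreover have "fst (vs ! 0) = exec_blocks P t ! 0" using ne vs(1) by (metis length_greater_0_conv nth_map)
    ultimately show "vs ! 0 = (exec_blocks P t ! 0, init_sstate)" using vs(3) ne by (metis prod.collapse)
  qed
  have m: "\<forall>l < length vs. fst (vs ! l) = exec_blocks P t ! l \<and> vs ! l \<in> cfg_V P X"
    using vs(1,2) by (metis nth_map nth_mem subsetD)
  show ?thesis using l h m vs(4) unfolding is_walk_def by blast
qed

end
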